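(* Let $n\geq5$ and let $U$ be a monomial. Then $x_n^2x_{n-2}^2U\in G(J(P_n)^2)$ if and only if $U\in G(J(P_{n-3})^2)$.
   Context: For $m\geq1$, $P_m$ is the path graph on vertices $x_1,\ldots,x_m$ with edges $\{x_i,x_{i+1}\}$; $J(P_m)$ is its cover ideal in a polynomial ring over a field, generated by the monomials $\prod_{x\in C}x$ with $C$ a minimal vertex cover of $P_m$; $G(I)$ denotes the set of minimal monomial generators of a monomial ideal $I$. *)

theory Defs
  imports Main "HOL-Library.Multiset"
begin

text \<open>Monomials in the variables x_1, x_2, ... are encoded as finite multisets of
variable indices (the exponent of x_i is the multiplicity of i). Monomial u divides
monomial v iff u is a sub-multiset of v; the product of monomials is multiset sum.
A monomial ideal is represented by the set of monomials it contains.\<close>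

type_synonym monomial = "nat multiset"

definition mono_ideal :: "monomial set \<Rightarrow> monomial set" where
  "mono_ideal S = {m. \<exists>s\<in>S. s \<subseteq># m}"

definition mingens :: "monomial set \<Rightarrow> monomial set" where
  "mingens I = {m \<in> I. \<forall>m'\<in>I. m' \<subseteq># m \<longrightarrow> m' = m}"

definition ideal_square :: "monomial set \<Rightarrow> monomial set" where
  "ideal_square I = mono_ideal {a + b | a b. a \<in> I \<and> b \<in> I}"

definition path_vertex_cover :: "nat \<Rightarrow> nat set \<Rightarrow> bool" where
  "path_vertex_cover m C \<longleftrightarrow> C \<subseteq> {1..m} \<and> (\<forall>i. 1 \<le> i \<and> i + 1 \<le> m \<longrightarrow> i \<in> C \<or> i + 1 \<in> C)"

definition min_path_vertex_cover :: "nat \<Rightarrow> nat set \<Rightarrow> bool" where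
  "min_path_vertex_cover m C \<longleftrightarrow> path_vertex_cover m C \<and>
     (\<forall>D. path_vertex_cover m D \<and> D \<subseteq> C \<longrightarrow> D = C)"

definition cover_ideal_path :: "nat \<Rightarrow> monomial set" where
  "cover_ideal_path m = mono_ideal {mset_set C | C. min_path_vertex_cover m C}"

end

theory Submission
  imports Defs
begin

lemma notin_big: assumes "D \<subseteq> {1..k}" "k < (x::nat)" shows "x \<notin> D"
proof
  assume "x \<in> D" then have "x \<in> {1..k}" using assms by blast
  then show False using assms(2) by simp
qed

lemma sq_eq:
  "ideal_square (mono_ideal S) = mono_ideal {a + b | a b. a \<in> S \<and> b \<in> S}"
  unfolding ideal_square_def mono_ideal_def
proof (intro set_eqI iffI)
  fix m assume "m \<in> {m. \<exists>s\<in>{a + b |a b. a \<in> {m. \<exists>s\<in>S. s \<subseteq># m} \<and> b \<in> {m. \<exists>s\<in>S. s \<subseteq># m}}. s \<subseteq># m}"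
  then obtain a b s1 s2 where "a + b \<subseteq># m" "s1 \<in> S" "s2 \<in> S" "s1 \<subseteq># a" "s2 \<subseteq># b" by blast
  then have "s1 + s2 \<subseteq># m" by (meson subset_mset.add_mono subset_mset.order_trans)
  then show "m \<in> {m. \<exists>s\<in>{a + b |a b. a \<in> S \<and> b \<in> S}. s \<subseteq># m}" using \<open>s1 \<in> S\<close> \<open>s2 \<in> S\<close> by blast
next
  fix m assume "m \<in> {m. \<exists>s\<in>{a + b |a b. a \<in> S \<and> b \<in> S}. s \<subseteq># m}"
  then show "m \<in> {m. \<exists>s\<in>{a + b |a b. a \<in> {m. \<exists>s\<in>S. s \<subseteq># m} \<and> b \<in> {m. \<exists>s\<in>S. s \<subseteq># m}}. s \<subseteq># m}"
    by blast
qed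

lemma mingens_mono:
  "mingens (mono_ideal T) = {m \<in> T. \<forall>t\<in>T. t \<subseteq># m \<longrightarrow> t = m}"
  unfolding mingens_def mono_ideal_def
proof (intro set_eqI iffI)
  fix m assume h: "m \<in> {m \<in> {m. \<exists>s\<in>T. s \<subseteq># m}. \<forall>m'\<in>{m. \<exists>s\<in>T. s \<subseteq># m}. m' \<subseteq># m \<longrightarrow> m' = m}"
  then obtain s where s: "s \<in> T" "s \<subseteq># m" by blast
  then have "s = m" using h by blast
  then show "m \<in> {m \<in> T. \<forall>t\<in>T. t \<subseteq># m \<longrightarrow> t = m}" using h s by auto
next
  fix m assume h: "m \<in> {m \<in> T. \<forall>t\<in>T. t \<subseteq># m \<longrightarrow> t = m}"
  show "m \<in> {m \<in> {m. \<exists>s\<in>T. s \<subseteq># m}. \<forall>m'\<in>{m. \<exists>s\<in>T. s \<subseteq># m}. m' \<subseteq># m \<longrightarrow> m' = m}"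
  proof (intro CollectI conjI ballI impI)
    show "\<exists>s\<in>T. s \<subseteq># m" using h by blast
    fix m' assume a: "m' \<in> {m. \<exists>s\<in>T. s \<subseteq># m}" "m' \<subseteq># m"
    then obtain s where s: "s \<in> T" "s \<subseteq># m'" by blast
    then have "s \<subseteq># m" using a(2) by (meson subset_mset.order_trans)
    then have "s = m" using h s by blast
    then show "m' = m" using s a(2) by (metis subset_mset.antisym)
  qed
qed

definition TT :: "nat \<Rightarrow> monomial set" where
  "TT m = {a + b | a b. a \<in> {mset_set C | C. min_path_vertex_cover m C} \<and> b \<in> {mset_set C | C. min_path_vertex_cover m C}}"

lemma mg_eq: "mingens (ideal_square (cover_ideal_path m)) = {u \<in> TT m. \<forall>t\<in>TT m. t \<subseteq># u \<longrightarrow> t = u}"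
  unfolding cover_ideal_path_def sq_eq mingens_mono TT_def ..

lemma L3:
  assumes "min_path_vertex_cover (k+3) C" "k+2 \<notin> C"
  shows "k+1 \<in> C \<and> k+3 \<in> C"
proof -
  have "\<forall>i. 1 \<le> i \<and> i + 1 \<le> k+3 \<longrightarrow> i \<in> C \<or> i + 1 \<in> C"
    using assms unfolding min_path_vertex_cover_def path_vertex_cover_def by blast
  from this[rule_format, of "k+1"] this[rule_format, of "k+2"] assms(2) show ?thesis
    by (auto simp: numeral_3_eq_3)
qed

lemma L2:
  assumes "min_path_vertex_cover k D"
  shows "min_path_vertex_cover (k+3) (D \<union> {k+1,k+3})"
proof -
  have D: "D \<subseteq> {1..k}" "\<forall>i. 1 \<le> i \<and> i + 1 \<le> k \<longrightarrow> i \<in> D \<or> i + 1 \<in> D"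
    and Dm: "\<And>D'. path_vertex_cover k D' \<Longrightarrow> D' \<subseteq> D \<Longrightarrow> D' = D"
    using assms unfolding min_path_vertex_cover_def path_vertex_cover_def by blast+
  have cov: "path_vertex_cover (k+3) (D \<union> {k+1,k+3})"
    unfolding path_vertex_cover_def
  proof (intro conjI allI impI)
    show "D \<union> {k + 1, k + 3} \<subseteq> {1..k + 3}" using D by auto
    fix i assume i: "1 \<le> i \<and> i + 1 \<le> k + 3"
    show "i \<in> D \<union> {k + 1, k + 3} \<or> i + 1 \<in> D \<union> {k + 1, k + 3}"
    proof (cases "i + 1 \<le> k")
      case True then show ?thesis using D(2) i by blast
    next
      case False then have "i = k \<or> i = k+1 \<or> i = k+2" using i by auto
      then show ?thesis by auto
    qed
  qed
  show ?thesis unfolding min_path_vertex_cover_def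
  proof (intro conjI allI impI cov)
    fix E assume E: "path_vertex_cover (k + 3) E \<and> E \<subseteq> D \<union> {k + 1, k + 3}"
    have Ec: "\<forall>i. 1 \<le> i \<and> i + 1 \<le> k+3 \<longrightarrow> i \<in> E \<or> i + 1 \<in> E"
      using E unfolding path_vertex_cover_def by blast
    have "k+2 \<notin> D \<union> {k+1,k+3}" using notin_big[OF D(1), of "k+2"] by simp
    then have nk2: "k+2 \<notin> E" using E by blast
    have "k+1 \<in> E" using Ec[rule_format, of "k+1"] nk2 by auto
    moreover have "k+3 \<in> E" using Ec[rule_format, of "k+2"] nk2 by (auto simp: numeral_3_eq_3)
    moreover have "E \<inter> {1..k} = D"
    proof (rule Dm)
      show "path_vertex_cover k (E \<inter> {1..k})"
        unfolding path_vertex_cover_def using Ec by auto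
      show "E \<inter> {1..k} \<subseteq> D" using E by auto
    qed
    ultimately show "E = D \<union> {k + 1, k + 3}" using E by blast
  qed
qed

lemma L1:
  assumes "min_path_vertex_cover (k+3) C" "k+1 \<in> C" "k+3 \<in> C"
  shows "\<exists>D. C = D \<union> {k+1,k+3} \<and> D \<subseteq> {1..k} \<and> min_path_vertex_cover k D"
proof -
  have C: "C \<subseteq> {1..k+3}" "\<forall>i. 1 \<le> i \<and> i + 1 \<le> k+3 \<longrightarrow> i \<in> C \<or> i + 1 \<in> C"
    and Cm: "\<And>D'. path_vertex_cover (k+3) D' \<Longrightarrow> D' \<subseteq> C \<Longrightarrow> D' = C"
    using assms unfolding min_path_vertex_cover_def path_vertex_cover_def by blast+
  have nk2: "k+2 \<notin> C"
  proof
    assume h: "k+2 \<in> C"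
    have "path_vertex_cover (k+3) (C - {k+2})"
      unfolding path_vertex_cover_def
    proof (intro conjI allI impI)
      show "C - {k + 2} \<subseteq> {1..k + 3}" using C by auto
      fix i assume i: "1 \<le> i \<and> i + 1 \<le> k + 3"
      show "i \<in> C - {k + 2} \<or> i + 1 \<in> C - {k + 2}"
      proof (cases "i = k+1 \<or> i = k+2")
        case True then show ?thesis using assms by (auto simp: numeral_3_eq_3)
      next
        case False then show ?thesis using C(2) i by auto
      qed
    qed
    then have "C - {k+2} = C" using Cm by blast
    then show False using h by blast
  qed
  define D where "D = C - {k+1,k+3}"
  have DC: "C = D \<union> {k+1,k+3}" using assms D_def by auto
  have Dk: "D \<subseteq> {1..k}"
  proof
    fix x assume x: "x \<in> D"
    then have "x \<in> C" "x \<noteq> k+1" "x \<noteq> k+3" unfolding D_def by auto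
    moreover have "x \<noteq> k+2" using nk2 \<open>x \<in> C\<close> by blast
    ultimately have "1 \<le> x" "x \<le> k+3" "x \<noteq> k+1" "x \<noteq> k+2" "x \<noteq> k+3" using C(1) by auto
    then show "x \<in> {1..k}" by auto
  qed
  have "min_path_vertex_cover k D"
    unfolding min_path_vertex_cover_def
  proof (intro conjI allI impI)
    show pc: "path_vertex_cover k D" unfolding path_vertex_cover_def
      using Dk C(2) D_def by auto
    fix D' assume D': "path_vertex_cover k D' \<and> D' \<subseteq> D"
    have "path_vertex_cover (k+3) (D' \<union> {k+1,k+3})"
      unfolding path_vertex_cover_def
    proof (intro conjI allI impI)
      show "D' \<union> {k + 1, k + 3} \<subseteq> {1..k + 3}" using D' Dk by auto
      fix i assume i: "1 \<le> i \<and> i + 1 \<le> k + 3"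
      show "i \<in> D' \<union> {k + 1, k + 3} \<or> i + 1 \<in> D' \<union> {k + 1, k + 3}"
      proof (cases "i + 1 \<le> k")
        case True then show ?thesis using D' i unfolding path_vertex_cover_def by blast
      next
        case False then have "i = k \<or> i = k+1 \<or> i = k+2" using i by auto
        then show ?thesis by auto
      qed
    qed
    then have "D' \<union> {k+1,k+3} = C" using Cm D' DC by blast
    moreover have "D' \<subseteq> {1..k}" using D' Dk by blast
    then have "k+1 \<notin> D'" "k+3 \<notin> D'" by (rule notin_big, simp)+
    ultimately show "D' = D" using D' D_def by blast
  qed
  then show ?thesis using DC Dk by blast
qed

lemma ms_split:
  fixes k :: nat
  assumes "D \<subseteq> {1..k}"
  shows "mset_set (D \<union> {k+1,k+3}) = mset_set D + {#k+1, k+3#}"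
proof -
  have f: "finite D" using assms finite_subset by blast
  have "k+1 \<notin> D" "k+3 \<notin> D" by (rule notin_big[OF assms], simp)+
  then have "mset_set (insert (k+1) (insert (k+3) D)) = add_mset (k+1) (add_mset (k+3) (mset_set D))"
    using f by simp
  moreover have "D \<union> {k+1,k+3} = insert (k+1) (insert (k+3) D)" by blast
  ultimately show ?thesis by simp
qed

lemma cover_fin: "min_path_vertex_cover m C \<Longrightarrow> C \<subseteq> {1..m}"
  unfolding min_path_vertex_cover_def path_vertex_cover_def by blast

lemma main:
  "{#k+3, k+3, k+1, k+1#} + U \<in> {u \<in> TT (k+3). \<forall>t\<in>TT (k+3). t \<subseteq># u \<longrightarrow> t = u}
   \<longleftrightarrow> U \<in> {u \<in> TT k. \<forall>t\<in>TT k. t \<subseteq># u \<longrightarrow> t = u}"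
  (is "?M + U \<in> _ \<longleftrightarrow> _")
proof
  assume h: "?M + U \<in> {u \<in> TT (k+3). \<forall>t\<in>TT (k+3). t \<subseteq># u \<longrightarrow> t = u}"
  then obtain C1 C2 where C: "min_path_vertex_cover (k+3) C1" "min_path_vertex_cover (k+3) C2"
    and eq: "?M + U = mset_set C1 + mset_set C2"
    unfolding TT_def by blast
  have f1: "finite C1" "finite C2" using C cover_fin finite_subset by blast+
  have cnt: "\<And>x. count (?M + U) x \<le> count (mset_set C1) x + count (mset_set C2) x"
    using eq by simp
  have c1: "\<And>x C. finite C \<Longrightarrow> count (mset_set C) x = (if x \<in> C then 1 else 0)"
    by simp
  have "k+3 \<in> C1 \<and> k+3 \<in> C2" using cnt[of "k+3"] c1[OF f1(1)] c1[OF f1(2)]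
    by (simp split: if_splits)
  moreover have "k+1 \<in> C1 \<and> k+1 \<in> C2" using cnt[of "k+1"] c1[OF f1(1)] c1[OF f1(2)]
    by (simp split: if_splits)
  ultimately obtain D1 D2 where D: "C1 = D1 \<union> {k+1,k+3}" "D1 \<subseteq> {1..k}" "min_path_vertex_cover k D1"
     "C2 = D2 \<union> {k+1,k+3}" "D2 \<subseteq> {1..k}" "min_path_vertex_cover k D2"
    using L1[OF C(1)] L1[OF C(2)] by blast
  have "?M + U = ?M + (mset_set D1 + mset_set D2)"
    using eq D ms_split[of D1 k] ms_split[of D2 k] by (simp add: add_mset_commute)
  then have U: "U = mset_set D1 + mset_set D2" by simp
  show "U \<in> {u \<in> TT k. \<forall>t\<in>TT k. t \<subseteq># u \<longrightarrow> t = u}"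
  proof (intro CollectI conjI ballI impI)
    show "U \<in> TT k" unfolding TT_def U using D by blast
    fix t assume t: "t \<in> TT k" "t \<subseteq># U"
    then obtain G1 G2 where G: "min_path_vertex_cover k G1" "min_path_vertex_cover k G2"
      "t = mset_set G1 + mset_set G2" unfolding TT_def by blast
    have "mset_set (G1 \<union> {k+1,k+3}) + mset_set (G2 \<union> {k+1,k+3}) = ?M + t"
      using G ms_split[of G1 k] ms_split[of G2 k] cover_fin by (simp add: add_mset_commute)
    moreover have "mset_set (G1 \<union> {k+1,k+3}) + mset_set (G2 \<union> {k+1,k+3}) \<in> TT (k+3)"
      unfolding TT_def using L2 G by blast
    ultimately have "?M + t \<in> TT (k+3)" by simp
    moreover have "?M + t \<subseteq># ?M + U" using t by simp
    ultimately have "?M + t = ?M + U" using h by blast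
    then show "t = U" by simp
  qed
next
  assume h: "U \<in> {u \<in> TT k. \<forall>t\<in>TT k. t \<subseteq># u \<longrightarrow> t = u}"
  then obtain D1 D2 where D: "min_path_vertex_cover k D1" "min_path_vertex_cover k D2"
    and U: "U = mset_set D1 + mset_set D2" unfolding TT_def by blast
  have Dk: "D1 \<subseteq> {1..k}" "D2 \<subseteq> {1..k}" using D cover_fin by blast+
  have "mset_set (D1 \<union> {k+1,k+3}) + mset_set (D2 \<union> {k+1,k+3}) = ?M + U"
    using Dk ms_split[of D1 k] ms_split[of D2 k] U by (simp add: add_mset_commute)
  moreover have "mset_set (D1 \<union> {k+1,k+3}) + mset_set (D2 \<union> {k+1,k+3}) \<in> TT (k+3)"
    unfolding TT_def using L2 D by blast
  ultimately have inT: "?M + U \<in> TT (k+3)" by simp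
  have "k+2 \<notin> D1" "k+2 \<notin> D2" by (rule notin_big[OF Dk(1)], simp) (rule notin_big[OF Dk(2)], simp)
  then have U0: "count U (k+2) = 0" using U Dk finite_subset[OF Dk(1)] finite_subset[OF Dk(2)] by auto
  show "?M + U \<in> {u \<in> TT (k+3). \<forall>t\<in>TT (k+3). t \<subseteq># u \<longrightarrow> t = u}"
  proof (intro CollectI conjI ballI impI inT)
    fix t assume t: "t \<in> TT (k+3)" "t \<subseteq># ?M + U"
    then obtain E1 E2 where E: "min_path_vertex_cover (k+3) E1" "min_path_vertex_cover (k+3) E2"
      "t = mset_set E1 + mset_set E2" unfolding TT_def by blast
    have f1: "finite E1" "finite E2" using E cover_fin finite_subset by blast+
    have "count t (k+2) \<le> count (?M + U) (k+2)" using t(2) by (rule mset_subset_eq_count)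
    also have "count (?M + U) (k+2) = count U (k+2)" by simp
    finally have "count t (k+2) \<le> count U (k+2)" .
    then have "count t (k+2) = 0" using U0 by simp
    then have "k+2 \<notin> E1" "k+2 \<notin> E2" using E(3) f1 by auto
    then have "k+1 \<in> E1 \<and> k+3 \<in> E1" "k+1 \<in> E2 \<and> k+3 \<in> E2" using L3 E by blast+
    then obtain F1 F2 where F: "E1 = F1 \<union> {k+1,k+3}" "F1 \<subseteq> {1..k}" "min_path_vertex_cover k F1"
     "E2 = F2 \<union> {k+1,k+3}" "F2 \<subseteq> {1..k}" "min_path_vertex_cover k F2"
      using L1[OF E(1)] L1[OF E(2)] by blast
    have teq: "t = ?M + (mset_set F1 + mset_set F2)"
      using E(3) F ms_split[of F1 k] ms_split[of F2 k] by (simp add: add_mset_commute)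
    have "mset_set F1 + mset_set F2 \<in> TT k" unfolding TT_def using F by blast
    moreover have "mset_set F1 + mset_set F2 \<subseteq># U" using t(2) unfolding teq
      by (rule subset_mset.add_le_imp_le_left)
    ultimately have "mset_set F1 + mset_set F2 = U" using h by blast
    then show "t = ?M + U" using teq by simp
  qed
qed

theorem lemma3p9:
  fixes n :: nat and U :: monomial
  assumes "n \<ge> 5"
  shows "{#n, n, n - 2, n - 2#} + U \<in> mingens (ideal_square (cover_ideal_path n))
     \<longleftrightarrow> U \<in> mingens (ideal_square (cover_ideal_path (n - 3)))"
proof -
  define k where "k = n - 3"
  have k: "n = k + 3" using assms unfolding k_def by simp
  have "n - 2 = k + 1" "n - 3 = k" using k by auto
  then show ?thesis unfolding mg_eq using main[of k U] k by simp
qed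

end
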